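(* Let $\mathbf{A}=\langle A;P\rangle$ be a partial algebra with more than one element, and let $\mathbf{A}_0$ be its one-point completion. Then for every $n$: (1) any generating set for $\mathbf{A}^n$ is a generating set for $\mathbf{A}_0^n$, and (2) any generating set for $\mathbf{A}_0^n$ contains a generating set for $\mathbf{A}^n$. In particular, least size generating sets for $\mathbf{A}^n$ and $\mathbf{A}_0^n$ have the same size, and if $\mathbf{A}^n$ or $\mathbf{A}_0^n$ have any minimal generating sets, then they are the same.
   Context: A partial algebra is a set equipped with a set of partial operations. Powers of partial algebras are formed coordinatewise: a partial operation is defined on a tuple of elements of $A^n$ exactly when it is defined in each coordinate. A subset $G$ generates a partial algebra if the smallest subset containing $G$ and closed under all partial operations (whenever defined) is the whole universe. The one-point completion of $\mathbf{A}=\langle A;P\rangle$ is the total algebra $\mathbf{A}_0$ with universe $A_0=A\cup\{0\}$, where $0\notin A$, and operations $\{p_0: p\in P\}\cup\{\wedge\}$: if $p\in P$ is an $m$-ary partial operation with domain $D\subseteq A^m$, then $p_0(\vec a)=p(\vec a)$ for $\vec a\in D$ and $p_0(\vec a)=0$ for $\vec a\in A_0^m\setminus D$; and $a\wedge b=a$ if $a=b$, $a\wedge b=0$ otherwise. *)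

theory Defs
  imports Main
begin

definition partial_algebra :: "'a set \<Rightarrow> ('i \<Rightarrow> nat) \<Rightarrow> ('i \<Rightarrow> 'a list \<Rightarrow> 'a option) \<Rightarrow> bool" where
  "partial_algebra U ar f \<longleftrightarrow>
     (\<forall>i xs y. f i xs = Some y \<longrightarrow> length xs = ar i \<and> set xs \<subseteq> U \<and> y \<in> U)"

inductive_set gen_by :: "('i \<Rightarrow> 'a list \<Rightarrow> 'a option) \<Rightarrow> 'a set \<Rightarrow> 'a set"
  for f :: "'i \<Rightarrow> 'a list \<Rightarrow> 'a option" and G :: "'a set" where
  base: "x \<in> G \<Longrightarrow> x \<in> gen_by f G"
| step: "(\<forall>x\<in>set xs. x \<in> gen_by f G) \<Longrightarrow> f i xs = Some y \<Longrightarrow> y \<in> gen_by f G"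

definition generates :: "'a set \<Rightarrow> ('i \<Rightarrow> 'a list \<Rightarrow> 'a option) \<Rightarrow> 'a set \<Rightarrow> bool" where
  "generates U f G \<longleftrightarrow> G \<subseteq> U \<and> gen_by f G = U"

definition minimal_generating :: "'a set \<Rightarrow> ('i \<Rightarrow> 'a list \<Rightarrow> 'a option) \<Rightarrow> 'a set \<Rightarrow> bool" where
  "minimal_generating U f G \<longleftrightarrow> generates U f G \<and> (\<forall>H. H \<subset> G \<longrightarrow> \<not> generates U f H)"

definition pow_univ :: "nat \<Rightarrow> 'a set \<Rightarrow> 'a list set" where
  "pow_univ n U = {xs. length xs = n \<and> set xs \<subseteq> U}"

definition pow_op :: "nat \<Rightarrow> ('i \<Rightarrow> nat) \<Rightarrow> ('i \<Rightarrow> 'a list \<Rightarrow> 'a option)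
    \<Rightarrow> 'i \<Rightarrow> 'a list list \<Rightarrow> 'a list option" where
  "pow_op n ar f i xss =
     (if length xss = ar i \<and> (\<forall>xs\<in>set xss. length xs = n)
         \<and> (\<forall>j<n. f i (map (\<lambda>xs. xs ! j) xss) \<noteq> None)
      then Some (map (\<lambda>j. the (f i (map (\<lambda>xs. xs ! j) xss))) [0..<n])
      else None)"

text \<open>One-point completion with new element z \<notin> U: operation symbols 'i option,
  Some i is p_0 and None is the binary operation \<and>.\<close>

fun comp_ar :: "('i \<Rightarrow> nat) \<Rightarrow> 'i option \<Rightarrow> nat" where
  "comp_ar ar (Some i) = ar i"
| "comp_ar ar None = 2"

fun comp_op :: "'a set \<Rightarrow> 'a \<Rightarrow> ('i \<Rightarrow> nat) \<Rightarrow> ('i \<Rightarrow> 'a list \<Rightarrow> 'a option)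
    \<Rightarrow> 'i option \<Rightarrow> 'a list \<Rightarrow> 'a option" where
  "comp_op U z ar f (Some i) xs =
     (if length xs = ar i \<and> set xs \<subseteq> insert z U
      then (case f i xs of Some y \<Rightarrow> Some y | None \<Rightarrow> Some z) else None)"
| "comp_op U z ar f None xs =
     (if length xs = 2 \<and> set xs \<subseteq> insert z U
      then Some (if xs ! 0 = xs ! 1 then xs ! 0 else z) else None)"

end

theory Submission
  imports Defs
begin

lemma pow_op_SomeD:
  assumes "pow_op n ar f i xss = Some y"
  shows "length xss = ar i \<and> (\<forall>xs\<in>set xss. length xs = n)
     \<and> (\<forall>j<n. f i (map (\<lambda>xs. xs ! j) xss) \<noteq> None)
     \<and> y = map (\<lambda>j. the (f i (map (\<lambda>xs. xs ! j) xss))) [0..<n]"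
  using assms by (simp add: pow_op_def split: if_splits)

lemma closure:
  assumes pa: "partial_algebra U ar f" and G: "G \<subseteq> pow_univ n U"
  shows "gen_by (pow_op n ar f) G \<subseteq> pow_univ n U"
proof
  fix y assume "y \<in> gen_by (pow_op n ar f) G"
  then show "y \<in> pow_univ n U"
  proof induction
    case (base x) then show ?case using G by auto
  next
    case (step xs i y)
    from pow_op_SomeD[OF step(2)] have
      d: "\<forall>j<n. f i (map (\<lambda>xs. xs ! j) xs) \<noteq> None"
      and y: "y = map (\<lambda>j. the (f i (map (\<lambda>xs. xs ! j) xs))) [0..<n]" by auto
    have "\<forall>j<n. the (f i (map (\<lambda>xs. xs ! j) xs)) \<in> U"
    proof (intro allI impI)
      fix j assume "j < n"
      with d obtain w where "f i (map (\<lambda>xs. xs ! j) xs) = Some w" by blast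
      with pa show "the (f i (map (\<lambda>xs. xs ! j) xs)) \<in> U"
        unfolding partial_algebra_def by auto
    qed
    then show ?case using y by (auto simp: pow_univ_def)
  qed
qed

lemma comp_pa:
  assumes pa: "partial_algebra U ar f"
  shows "partial_algebra (insert z U) (comp_ar ar) (comp_op U z ar f)"
  unfolding partial_algebra_def
proof (intro allI impI)
  fix i xs y assume h: "comp_op U z ar f i xs = Some y"
  show "length xs = comp_ar ar i \<and> set xs \<subseteq> insert z U \<and> y \<in> insert z U"
  proof (cases i)
    case None
    then have c: "length xs = 2" "set xs \<subseteq> insert z U"
      and y: "y = (if xs ! 0 = xs ! 1 then xs ! 0 else z)" using h by (auto split: if_splits)
    have "xs ! 0 \<in> set xs" using c(1) by simp
    then have "xs ! 0 \<in> insert z U" using c(2) by blast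
    then show ?thesis using c y None by auto
  next
    case (Some i')
    then show ?thesis using h pa unfolding partial_algebra_def
      by (auto split: if_splits option.splits)
  qed
qed

lemma op_lift:
  assumes pa: "partial_algebra U ar f"
    and h: "pow_op n ar f i xss = Some y"
  shows "pow_op n (comp_ar ar) (comp_op U z ar f) (Some i) xss = Some y"
proof -
  from pow_op_SomeD[OF h] have l: "length xss = ar i" and ln: "\<forall>xs\<in>set xss. length xs = n"
    and d: "\<forall>j<n. f i (map (\<lambda>xs. xs ! j) xss) \<noteq> None"
    and y: "y = map (\<lambda>j. the (f i (map (\<lambda>xs. xs ! j) xss))) [0..<n]" by auto
  have e: "comp_op U z ar f (Some i) (map (\<lambda>xs. xs ! j) xss) = f i (map (\<lambda>xs. xs ! j) xss)"
    if "j < n" for j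
  proof -
    from d that obtain w where w: "f i (map (\<lambda>xs. xs ! j) xss) = Some w" by blast
    with pa have "set (map (\<lambda>xs. xs ! j) xss) \<subseteq> U" unfolding partial_algebra_def by blast
    then show ?thesis using w l by auto
  qed
  show ?thesis using l ln d e unfolding y pow_op_def by auto
qed

lemma gen_mono:
  assumes pa: "partial_algebra U ar f"
  shows "gen_by (pow_op n ar f) G \<subseteq> gen_by (pow_op n (comp_ar ar) (comp_op U z ar f)) G"
proof
  fix y assume "y \<in> gen_by (pow_op n ar f) G"
  then show "y \<in> gen_by (pow_op n (comp_ar ar) (comp_op U z ar f)) G"
  proof induction
    case (base x) then show ?case by (rule gen_by.base)
  next
    case (step xs i y)
    have "\<forall>x\<in>set xs. x \<in> gen_by (pow_op n (comp_ar ar) (comp_op U z ar f)) G"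
      using step(1) by blast
    then show ?case by (rule gen_by.step) (rule op_lift[OF pa step(2)])
  qed
qed

lemma meet:
  assumes x: "x \<in> pow_univ n (insert z U)" and a: "a \<in> U" and b: "b \<in> U" and ab: "a \<noteq> b"
    and zU: "z \<notin> U"
  defines "u \<equiv> map (\<lambda>c. if c \<in> U then c else a) x"
    and "v \<equiv> map (\<lambda>c. if c \<in> U then c else b) x"
  shows "u \<in> pow_univ n U" "v \<in> pow_univ n U"
    "pow_op n (comp_ar ar) (comp_op U z ar f) None [u, v] = Some x"
proof -
  show "u \<in> pow_univ n U" "v \<in> pow_univ n U" using x a b by (auto simp: pow_univ_def u_def v_def)
  have ln: "length x = n" and sx: "set x \<subseteq> insert z U" using x by (auto simp: pow_univ_def)
  have c: "comp_op U z ar f None [u ! j, v ! j] = Some (x ! j)" if "j < n" for j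
  proof -
    have "x ! j \<in> set x" using that ln by simp
    then have xj: "x ! j \<in> insert z U" using sx by blast
    have uj: "u ! j = (if x ! j \<in> U then x ! j else a)" and vj: "v ! j = (if x ! j \<in> U then x ! j else b)"
      using that ln by (auto simp: u_def v_def)
    show ?thesis using xj uj vj a b ab by auto
  qed
  have "map (\<lambda>j. the (comp_op U z ar f None (map (\<lambda>xs. xs ! j) [u, v]))) [0..<n] = x"
  proof (rule nth_equalityI)
    show "length (map (\<lambda>j. the (comp_op U z ar f None (map (\<lambda>xs. xs ! j) [u, v]))) [0..<n]) = length x"
      using ln by simp
    fix j assume "j < length (map (\<lambda>j. the (comp_op U z ar f None (map (\<lambda>xs. xs ! j) [u, v]))) [0..<n])"
    then have j: "j < n" by simp
    show "map (\<lambda>j. the (comp_op U z ar f None (map (\<lambda>xs. xs ! j) [u, v]))) [0..<n] ! j = x ! j"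
      using j by (simp only: nth_map_upt length_upt nth_upt) (simp del: comp_op.simps add: c[OF j])
  qed
  then show "pow_op n (comp_ar ar) (comp_op U z ar f) None [u, v] = Some x"
    using c ln unfolding pow_op_def by (auto simp: u_def v_def)
qed

lemma reflect:
  assumes pa: "partial_algebra U ar f"
    and y: "y \<in> gen_by (pow_op n (comp_ar ar) (comp_op U z ar f)) G"
    and zU: "z \<notin> U"
  shows "y \<in> pow_univ n U \<Longrightarrow> y \<in> gen_by (pow_op n ar f) (G \<inter> pow_univ n U)"
  using y
proof induction
  case (base x) then show ?case by (auto intro: gen_by.base)
next
  case (step xss op y)
  from pow_op_SomeD[OF step(2)] have l: "length xss = comp_ar ar op"
    and ln: "\<forall>xs\<in>set xss. length xs = n"
    and d: "\<forall>j<n. comp_op U z ar f op (map (\<lambda>xs. xs ! j) xss) \<noteq> None"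
    and yv: "y = map (\<lambda>j. the (comp_op U z ar f op (map (\<lambda>xs. xs ! j) xss))) [0..<n]" by auto
  have yU: "\<forall>j<n. y ! j \<in> U" and ly: "length y = n" using step(3) by (auto simp: pow_univ_def)
  have yj: "y ! j = the (comp_op U z ar f op (map (\<lambda>xs. xs ! j) xss))" if "j < n" for j
    using that yv by simp
  show ?case
  proof (cases op)
    case None
    with l obtain u v where uv: "xss = [u, v]"
      by (cases xss; cases "tl xss"; cases "tl (tl xss)"; auto simp: numeral_2_eq_2)
    have lu: "length u = n" using ln uv by auto
    have "u = y"
    proof (rule nth_equalityI)
      show "length u = length y" using lu ly by simp
      fix j assume "j < length u"
      then have j: "j < n" using lu by simp
      have e: "y ! j = the (comp_op U z ar f None [u ! j, v ! j])" using yj[OF j] None uv by simp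
      show "u ! j = y ! j"
      proof (rule ccontr)
        assume ne: "u ! j \<noteq> y ! j"
        have "y ! j = z \<or> comp_op U z ar f None [u ! j, v ! j] = None"
          using e ne by (auto split: if_splits)
        moreover have "comp_op U z ar f None [u ! j, v ! j] \<noteq> None" using d j None uv by simp
        ultimately show False using yU j step(3) zU by auto
      qed
    qed
    then show ?thesis using step(1) step(3) uv by auto
  next
    case (Some i)
    have fj: "f i (map (\<lambda>xs. xs ! j) xss) = Some (y ! j)" if j: "j < n" for j
    proof -
      have c: "comp_op U z ar f (Some i) (map (\<lambda>xs. xs ! j) xss) \<noteq> None" using d j Some by simp
      have e: "y ! j = the (comp_op U z ar f (Some i) (map (\<lambda>xs. xs ! j) xss))" using yj[OF j] Some by simp
      show ?thesis
      proof (cases "f i (map (\<lambda>xs. xs ! j) xss)")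
        case None
        then have "y ! j = z" using c e by (auto split: if_splits)
        then show ?thesis using yU j step(3) zU by auto
      next
        case (Some w) then show ?thesis using c e by (auto split: if_splits)
      qed
    qed
    have inU: "xs \<in> pow_univ n U" if xs: "xs \<in> set xss" for xs
    proof -
      have "\<forall>j<n. xs ! j \<in> U"
      proof (intro allI impI)
        fix j assume j: "j < n"
        have "set (map (\<lambda>xs. xs ! j) xss) \<subseteq> U" using fj[OF j] pa unfolding partial_algebra_def by blast
        then show "xs ! j \<in> U" using xs by auto
      qed
      moreover have "length xs = n" using ln xs by blast
      ultimately show ?thesis by (auto simp: pow_univ_def in_set_conv_nth)
    qed
    have IH: "\<forall>xs\<in>set xss. xs \<in> gen_by (pow_op n ar f) (G \<inter> pow_univ n U)"
      using step(1) inU by blast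
    have "pow_op n ar f i xss = Some y"
    proof -
      have "map (\<lambda>j. the (f i (map (\<lambda>xs. xs ! j) xss))) [0..<n] = y"
        by (rule nth_equalityI) (simp_all add: ly fj)
      then show ?thesis using l ln fj Some unfolding pow_op_def by auto
    qed
    then show ?thesis using IH by (rule gen_by.step[rotated])
  qed
qed


theorem theorem3p2:
  fixes U :: "'a set" and ar :: "'i \<Rightarrow> nat" and f :: "'i \<Rightarrow> 'a list \<Rightarrow> 'a option"
    and z :: 'a and n :: nat
  assumes "partial_algebra U ar f"
    and "\<exists>a\<in>U. \<exists>b\<in>U. a \<noteq> b"
    and "z \<notin> U"
  defines "An \<equiv> pow_univ n U" and "Fn \<equiv> pow_op n ar f"
    and "A0n \<equiv> pow_univ n (insert z U)" and "F0n \<equiv> pow_op n (comp_ar ar) (comp_op U z ar f)"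
  shows "(\<forall>G. generates An Fn G \<longrightarrow> generates A0n F0n G)
       \<and> (\<forall>G. generates A0n F0n G \<longrightarrow> (\<exists>H\<subseteq>G. generates An Fn H))
       \<and> (\<forall>S :: 'b set. (\<exists>G. generates An Fn G \<and> (\<exists>h. inj_on h G \<and> h ` G \<subseteq> S))
                      \<longleftrightarrow> (\<exists>G. generates A0n F0n G \<and> (\<exists>h. inj_on h G \<and> h ` G \<subseteq> S)))
       \<and> (\<forall>G. minimal_generating An Fn G \<longleftrightarrow> minimal_generating A0n F0n G)"
proof -
  note pa = assms(1)
  obtain a b where a: "a \<in> U" and b: "b \<in> U" and ab: "a \<noteq> b" using assms(2) by blast
  have sub: "An \<subseteq> A0n" unfolding An_def A0n_def pow_univ_def by auto
  have P1: "generates A0n F0n G" if g: "generates An Fn G" for G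
  proof -
    have GA: "G \<subseteq> A0n" "G \<subseteq> An" using g sub unfolding generates_def by auto
    have c: "gen_by F0n G \<subseteq> A0n"
      unfolding F0n_def A0n_def
      by (rule closure[OF comp_pa[OF pa]]) (use GA in \<open>simp add: A0n_def\<close>)
    have An_in: "An \<subseteq> gen_by F0n G"
      using g gen_mono[OF pa, of n G z] unfolding generates_def Fn_def F0n_def by auto
    have "A0n \<subseteq> gen_by F0n G"
    proof
      fix x assume x: "x \<in> A0n"
      define u where "u = map (\<lambda>c. if c \<in> U then c else a) x"
      define v where "v = map (\<lambda>c. if c \<in> U then c else b) x"
      note m = meet[OF x[unfolded A0n_def] a b ab assms(3), folded u_def v_def]
      have "\<forall>w\<in>set [u, v]. w \<in> gen_by F0n G" using m(1,2) An_in unfolding An_def by auto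
      then show "x \<in> gen_by F0n G"
        by (rule gen_by.step) (use m(3) in \<open>simp add: F0n_def\<close>)
    qed
    then show ?thesis using c GA unfolding generates_def by auto
  qed
  have P2: "generates An Fn (G \<inter> An)" if g: "generates A0n F0n G" for G
  proof -
    have "gen_by Fn (G \<inter> An) \<subseteq> An"
      unfolding Fn_def An_def by (rule closure[OF pa]) auto
    moreover have "An \<subseteq> gen_by Fn (G \<inter> An)"
    proof
      fix y assume y: "y \<in> An"
      then have "y \<in> gen_by F0n G" using g sub unfolding generates_def by auto
      then show "y \<in> gen_by Fn (G \<inter> An)"
        using reflect[OF pa _ assms(3)] y unfolding F0n_def Fn_def An_def by blast
    qed
    ultimately show ?thesis unfolding generates_def by auto
  qed
  have P2': "\<exists>H\<subseteq>G. generates An Fn H" if "generates A0n F0n G" for G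
    using P2[OF that] by blast
  have P3: "(\<exists>G. generates An Fn G \<and> (\<exists>h. inj_on h G \<and> h ` G \<subseteq> S))
                      \<longleftrightarrow> (\<exists>G. generates A0n F0n G \<and> (\<exists>h. inj_on h G \<and> h ` G \<subseteq> S))"
    for S :: "'b set"
  proof
    assume "\<exists>G. generates An Fn G \<and> (\<exists>h. inj_on h G \<and> h ` G \<subseteq> S)"
    then show "\<exists>G. generates A0n F0n G \<and> (\<exists>h. inj_on h G \<and> h ` G \<subseteq> S)" using P1 by blast
  next
    assume "\<exists>G. generates A0n F0n G \<and> (\<exists>h. inj_on h G \<and> h ` G \<subseteq> S)"
    then obtain G h where g: "generates A0n F0n G" and h: "inj_on h G" "h ` G \<subseteq> S" by blast
    have "inj_on h (G \<inter> An)" "h ` (G \<inter> An) \<subseteq> S" using h by (auto intro: inj_on_subset)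
    then show "\<exists>G. generates An Fn G \<and> (\<exists>h. inj_on h G \<and> h ` G \<subseteq> S)" using P2[OF g] by blast
  qed
  have P4: "minimal_generating An Fn G \<longleftrightarrow> minimal_generating A0n F0n G" for G
  proof
    assume m: "minimal_generating An Fn G"
    show "minimal_generating A0n F0n G" unfolding minimal_generating_def
    proof (intro conjI allI impI)
      show "generates A0n F0n G" using m P1 unfolding minimal_generating_def by blast
      fix H assume H: "H \<subset> G"
      show "\<not> generates A0n F0n H"
      proof
        assume "generates A0n F0n H"
        then obtain H' where "H' \<subseteq> H" "generates An Fn H'" using P2' by blast
        then show False using m H unfolding minimal_generating_def by blast
      qed
    qed
  next
    assume m: "minimal_generating A0n F0n G"
    then have g: "generates A0n F0n G" unfolding minimal_generating_def by blast
    have ga: "generates An Fn (G \<inter> An)" using P2[OF g] .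
    have "\<not> (G \<inter> An \<subset> G)" using m P1[OF ga] unfolding minimal_generating_def by blast
    then have e: "G \<inter> An = G" by blast
    show "minimal_generating An Fn G" unfolding minimal_generating_def
    proof (intro conjI allI impI)
      show "generates An Fn G" using ga e by simp
      fix H assume H: "H \<subset> G"
      show "\<not> generates An Fn H" using P1 m H unfolding minimal_generating_def by blast
    qed
  qed
  show ?thesis using P1 P2' P3 P4 by blast
qed

end
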